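(* Let $\Gamma$ be a totally ordered abelian group, written additively, and let $S=\Gamma_{\geq 0}$ be the submonoid of its nonnegative elements. Let $K$ be any field and let $D=K[x^S]$ be the semigroup algebra of $S$ over $K$. Then the reciprocal complement $R(D)$ is a valuation ring with value group $\Gamma$.
   Context: For an integral domain $D$ with fraction field $F$, the reciprocal complement $R(D)$ is the subring of $F$ generated by all elements $1/d$ with $d\in D\setminus\{0\}$; equivalently, the set of all finite sums $\sum_{i=1}^n 1/d_i$ with $d_i\in D\setminus\{0\}$, $n\ge 0$. *)

theory Defs
  imports "HOL-Library.Poly_Mapping" "HOL-Computational_Algebra.Fraction_Field"
begin

typedef (overloaded) 'g nonneg = "{g :: 'g :: linordered_ab_group_add. 0 \<le> g}"
  by auto

setup_lifting type_definition_nonneg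

instantiation nonneg :: (linordered_ab_group_add) "{comm_monoid_add, minus}"
begin
lift_definition zero_nonneg :: "'a nonneg" is 0 by simp
lift_definition plus_nonneg :: "'a nonneg \<Rightarrow> 'a nonneg \<Rightarrow> 'a nonneg" is "(+)" by simp
lift_definition minus_nonneg :: "'a nonneg \<Rightarrow> 'a nonneg \<Rightarrow> 'a nonneg"
  is "\<lambda>a b. max 0 (a - b)" by simp
instance
proof
  fix a b c :: "'a nonneg"
  show "a + b + c = a + (b + c)" by transfer (simp add: add.assoc)
  show "a + b = b + a" by transfer (simp add: add.commute)
  show "0 + a = a" by transfer simp
qed
end

instantiation nonneg :: (linordered_ab_group_add) linorder
begin
lift_definition less_eq_nonneg :: "'a nonneg \<Rightarrow> 'a nonneg \<Rightarrow> bool" is "(\<le>)" .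
lift_definition less_nonneg :: "'a nonneg \<Rightarrow> 'a nonneg \<Rightarrow> bool" is "(<)" .
instance
proof
  fix x y z :: "'a nonneg"
  show "(x < y) = (x \<le> y \<and> \<not> y \<le> x)" by transfer auto
  show "x \<le> x" by transfer simp
  show "x \<le> y \<Longrightarrow> y \<le> z \<Longrightarrow> x \<le> z" by transfer (rule order_trans)
  show "x \<le> y \<Longrightarrow> y \<le> x \<Longrightarrow> x = y" by transfer (rule antisym)
  show "x \<le> y \<or> y \<le> x" by transfer (rule linear)
qed
end

instance nonneg :: (linordered_ab_group_add) ordered_cancel_comm_monoid_add
proof
  fix a b c :: "'a nonneg"
  show "a \<le> b \<Longrightarrow> c + a \<le> c + b" by transfer simp
  show "a + b - a = b" by transfer simp
  show "a - b - c = a - (b + c)" proof transfer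
    fix a b c :: 'a
    assume "0 \<le> a" "0 \<le> b" "0 \<le> c"
    then show "max 0 (max 0 (a - b) - c) = max 0 (a - (b + c))"
      proof (cases "b \<le> a")
      case False
      have "b \<le> b + c" using \<open>0 \<le> c\<close> by simp
      with False have "\<not> b + c \<le> a" by (meson order_trans)
      with False \<open>0 \<le> c\<close> show ?thesis by (auto simp: max_def algebra_simps)
    qed (auto simp: max_def algebra_simps)
  qed
qed

type_synonym ('g, 'k) semigroup_algebra = "'g nonneg \<Rightarrow>\<^sub>0 'k"

definition reciprocal_complement :: "'a :: idom fract set" where
  "reciprocal_complement =
     {x. \<exists>ds :: 'a list. (\<forall>d\<in>set ds. d \<noteq> 0) \<and>
          x = sum_list (map (\<lambda>d. inverse (Fract d 1)) ds)}"

definition subring_of_field :: "'f :: field set \<Rightarrow> bool" where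
  "subring_of_field V \<longleftrightarrow> 0 \<in> V \<and> 1 \<in> V \<and>
     (\<forall>x\<in>V. \<forall>y\<in>V. x + y \<in> V \<and> x - y \<in> V \<and> x * y \<in> V)"

definition valuation_ring :: "'f :: field set \<Rightarrow> bool" where
  "valuation_ring V \<longleftrightarrow> subring_of_field V \<and>
     (\<forall>x. x \<noteq> 0 \<longrightarrow> x \<in> V \<or> inverse x \<in> V)"

text \<open>Equivalently F^*/V^* \<cong> \<Gamma> as ordered groups.\<close>
definition has_value_group :: "'f :: field set \<Rightarrow> 'g :: linordered_ab_group_add itself \<Rightarrow> bool" where
  "has_value_group V _ \<longleftrightarrow> (\<exists>v :: 'f \<Rightarrow> 'g.
     (\<forall>x y. x \<noteq> 0 \<longrightarrow> y \<noteq> 0 \<longrightarrow> v (x * y) = v x + v y) \<and>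
     v ` {x. x \<noteq> 0} = UNIV \<and>
     (\<forall>x. x \<noteq> 0 \<longrightarrow> (x \<in> V \<longleftrightarrow> 0 \<le> v x)))"

end

theory Submission
  imports Defs
begin


abbreviation (input) keys where "keys \<equiv> Poly_Mapping.keys"
abbreviation (input) lookup where "lookup \<equiv> Poly_Mapping.lookup"

definition deg :: "('g::linordered_ab_group_add nonneg \<Rightarrow>\<^sub>0 'k::field) \<Rightarrow> 'g nonneg" where
  "deg f = Max (keys f)"

lemma keys_single_nz: "c \<noteq> 0 \<Longrightarrow> keys (Poly_Mapping.single k c) = {k}"
  by simp

lemma deg_single[simp]: "c \<noteq> 0 \<Longrightarrow> deg (Poly_Mapping.single k c) = k"
  by (simp add: deg_def)

lemma deg_in_keys: "f \<noteq> 0 \<Longrightarrow> deg f \<in> keys f"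
  unfolding deg_def by (rule Max_in) auto

lemma le_deg: "k \<in> keys f \<Longrightarrow> k \<le> deg f"
  unfolding deg_def by (rule Max_ge) auto

lemma split_single:
  fixes f :: "'a \<Rightarrow>\<^sub>0 'b::ab_group_add"
  shows "f = Poly_Mapping.single a (lookup f a) + (f - Poly_Mapping.single a (lookup f a))"
  by simp

lemma keys_rest:
  fixes f :: "'a \<Rightarrow>\<^sub>0 'b::ab_group_add"
  shows "keys (f - Poly_Mapping.single a (lookup f a)) = keys f - {a}"
  by (auto simp: in_keys_iff lookup_minus lookup_single when_def split: if_splits)

lemma lookup_single_mult:
  fixes p :: "('g::linordered_ab_group_add nonneg \<Rightarrow>\<^sub>0 'k::field)"
  shows "lookup (Poly_Mapping.single m c * p) (m + q) = c * lookup p q"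
proof -
  let ?p' = "p - Poly_Mapping.single q (lookup p q)"
  have "Poly_Mapping.single m c * p = Poly_Mapping.single m c * Poly_Mapping.single q (lookup p q) + Poly_Mapping.single m c * ?p'"
    by (metis distrib_left split_single)
  also have "\<dots> = Poly_Mapping.single (m+q) (c * lookup p q) + Poly_Mapping.single m c * ?p'"
    by (simp add: mult_single)
  finally have e: "Poly_Mapping.single m c * p = Poly_Mapping.single (m+q) (c * lookup p q) + Poly_Mapping.single m c * ?p'" .
  have "m + q \<notin> keys (Poly_Mapping.single m c * ?p')"
  proof
    assume "m + q \<in> keys (Poly_Mapping.single m c * ?p')"
    then obtain a b where "a \<in> keys (Poly_Mapping.single m c)" "b \<in> keys ?p'" "m + q = a + b"
      using keys_mult by blast
    then show False by (auto simp: keys_rest split: if_splits)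
  qed
  then show ?thesis by (subst e) (simp add: lookup_add in_keys_iff)
qed

lemma lookup_single_mult0:
  fixes p :: "('g::linordered_ab_group_add nonneg \<Rightarrow>\<^sub>0 'k::field)"
  assumes "\<forall>q. k \<noteq> m + q"
  shows "lookup (Poly_Mapping.single m c * p) k = 0"
proof -
  have "k \<notin> keys (Poly_Mapping.single m c * p)"
    using keys_mult[of "Poly_Mapping.single m c" p] assms by (auto split: if_splits)
  then show ?thesis by (simp add: in_keys_iff)
qed

lemma deg_mult:
  fixes f g :: "('g::linordered_ab_group_add nonneg \<Rightarrow>\<^sub>0 'k::field)"
  assumes "f \<noteq> 0" "g \<noteq> 0"
  shows "deg (f * g) = deg f + deg g"
proof -
  let ?a = "deg f" and ?b = "deg g"
  let ?f' = "f - Poly_Mapping.single ?a (lookup f ?a)"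
  let ?g' = "g - Poly_Mapping.single ?b (lookup g ?b)"
  have kf: "\<And>x. x \<in> keys ?f' \<Longrightarrow> x < ?a" using le_deg[of _ f] by (force simp: keys_rest)
  have kg: "\<And>x. x \<in> keys ?g' \<Longrightarrow> x < ?b" using le_deg[of _ g] by (force simp: keys_rest)
  have "f * g = (Poly_Mapping.single ?a (lookup f ?a) + ?f') * (Poly_Mapping.single ?b (lookup g ?b) + ?g')"
    by simp
  also have "\<dots> = Poly_Mapping.single (?a + ?b) (lookup f ?a * lookup g ?b)
     + (Poly_Mapping.single ?a (lookup f ?a) * ?g' + ?f' * g)"
    by (simp add: algebra_simps mult_single)
  finally have e: "f * g = Poly_Mapping.single (?a + ?b) (lookup f ?a * lookup g ?b)
     + (Poly_Mapping.single ?a (lookup f ?a) * ?g' + ?f' * g)" .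
  have bound: "x \<le> ?a + ?b" if xk: "x \<in> keys (f * g)" for x
  proof -
    obtain a b where "a \<in> keys f" "b \<in> keys g" "x = a + b" using keys_mult[of f g] xk by blast
    then show ?thesis using le_deg add_mono by metis
  qed
  have n1: "?a + ?b \<notin> keys (Poly_Mapping.single ?a (lookup f ?a) * ?g')"
  proof
    assume "?a + ?b \<in> keys (Poly_Mapping.single ?a (lookup f ?a) * ?g')"
    then obtain a b where "a \<in> keys (Poly_Mapping.single ?a (lookup f ?a))" "b \<in> keys ?g'" "?a + ?b = a + b"
      using keys_mult by blast
    then show False using kg by (auto split: if_splits)
  qed
  have n2: "?a + ?b \<notin> keys (?f' * g)"
  proof
    assume "?a + ?b \<in> keys (?f' * g)"
    then obtain a b where "a \<in> keys ?f'" "b \<in> keys g" "?a + ?b = a + b"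
      using keys_mult by blast
    moreover have "a + b < ?a + ?b" using kf[OF \<open>a \<in> keys ?f'\<close>] le_deg[OF \<open>b \<in> keys g\<close>]
      by (rule add_less_le_mono)
    ultimately show False by simp
  qed
  have "lookup (f * g) (?a + ?b) = lookup f ?a * lookup g ?b"
    using n1 n2 by (subst e) (simp add: lookup_add in_keys_iff)
  moreover have "lookup f ?a \<noteq> 0" "lookup g ?b \<noteq> 0" using deg_in_keys assms by (auto simp: in_keys_iff)
  ultimately have "?a + ?b \<in> keys (f * g)" by (simp add: in_keys_iff)
  then show ?thesis using bound unfolding deg_def[of "f*g"]
    by (intro antisym Max_ge Max.boundedI) auto
qed

lemma deg_add:
  fixes f g :: "('g::linordered_ab_group_add nonneg \<Rightarrow>\<^sub>0 'k::field)"
  assumes "f + g \<noteq> 0" "f \<noteq> 0" "g \<noteq> 0"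
  shows "deg (f + g) \<le> max (deg f) (deg g)"
proof -
  have "x \<le> max (deg f) (deg g)" if "x \<in> keys (f+g)" for x
    using keys_add[of f g] that le_deg[of x f] le_deg[of x g] by (auto simp: le_max_iff_disj)
  then show ?thesis using assms unfolding deg_def[of "f+g"] by (intro Max.boundedI) auto
qed



lemma RC_I: "(\<forall>d\<in>set ds. d \<noteq> 0) \<Longrightarrow> sum_list (map (\<lambda>d. inverse (Fract d 1)) ds) \<in> (reciprocal_complement :: 'a::idom fract set)"
  unfolding reciprocal_complement_def by blast

lemma RC_E: "x \<in> (reciprocal_complement :: 'a::idom fract set) \<Longrightarrow> (\<And>ds. \<forall>d\<in>set ds. d \<noteq> 0 \<Longrightarrow> x = sum_list (map (\<lambda>d. inverse (Fract d 1)) ds) \<Longrightarrow> P) \<Longrightarrow> P"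
  unfolding reciprocal_complement_def by blast

lemma RC_recip: "(d::'a::idom) \<noteq> 0 \<Longrightarrow> inverse (Fract d 1) \<in> reciprocal_complement"
  using RC_I[of "[d]"] by simp

lemma RC_zero: "0 \<in> (reciprocal_complement :: 'a::idom fract set)"
  using RC_I[of "[]"] by simp

lemma RC_one: "1 \<in> (reciprocal_complement :: 'a::idom fract set)"
  using RC_recip[of "1::'a"] by (simp add: One_fract_def)

lemma RC_add: "x \<in> (reciprocal_complement :: 'a::idom fract set) \<Longrightarrow> y \<in> reciprocal_complement \<Longrightarrow> x + y \<in> reciprocal_complement"
  apply (erule RC_E, erule RC_E)
  subgoal for ds es using RC_I[of "ds @ es"] by auto
  done

lemma RC_uminus: "x \<in> (reciprocal_complement :: 'a::idom fract set) \<Longrightarrow> - x \<in> reciprocal_complement"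
proof (erule RC_E)
  fix ds :: "'a list" assume "\<forall>d\<in>set ds. d \<noteq> 0" "x = sum_list (map (\<lambda>d. inverse (Fract d 1)) ds)"
  then show ?thesis
  proof (induction ds arbitrary: x)
    case Nil then show ?case using RC_zero by simp
  next
    case (Cons d ds)
    have "- inverse (Fract d 1) = inverse (Fract (-d) 1)" by (metis inverse_fract minus_fract minus_fract_cancel minus_minus)
    from Cons.prems have nz: "-d \<noteq> 0" "\<forall>d\<in>set ds. d\<noteq>0" by auto
    have ih: "- sum_list (map (\<lambda>d. inverse (Fract d 1)) ds) \<in> reciprocal_complement"
      using Cons.IH[OF nz(2) refl] .
    have "- x = - inverse (Fract d 1) + - sum_list (map (\<lambda>d. inverse (Fract d 1)) ds)"
      unfolding Cons.prems(2) by (simp only: list.map sum_list.Cons minus_add_distrib)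
    also have "\<dots> = inverse (Fract (-d) 1) + - sum_list (map (\<lambda>d. inverse (Fract d 1)) ds)"
      using \<open>- inverse (Fract d 1) = inverse (Fract (-d) 1)\<close> by (simp only:)
    finally show ?case using RC_add[OF RC_recip[OF nz(1)] ih] by (simp only:)
  qed
qed

lemma RC_diff: "x \<in> (reciprocal_complement :: 'a::idom fract set) \<Longrightarrow> y \<in> reciprocal_complement \<Longrightarrow> x - y \<in> reciprocal_complement"
  using RC_add RC_uminus by (metis diff_conv_add_uminus)

lemma RC_mult_recip: "x \<in> (reciprocal_complement :: 'a::idom fract set) \<Longrightarrow> e \<noteq> 0 \<Longrightarrow> x * inverse (Fract e 1) \<in> reciprocal_complement"
proof (erule RC_E)
  fix ds :: "'a list" assume "e \<noteq> 0" "\<forall>d\<in>set ds. d \<noteq> 0" "x = sum_list (map (\<lambda>d. inverse (Fract d 1)) ds)"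
  then show ?thesis
  proof (induction ds arbitrary: x)
    case Nil then show ?case using RC_zero by simp
  next
    case (Cons d ds)
    have "inverse (Fract d 1) * inverse (Fract e 1) = inverse (Fract (d*e) 1)" by simp
    moreover have "d * e \<noteq> 0" using Cons by simp
    ultimately show ?case using Cons RC_recip[of "d*e"] RC_add by (simp add: distrib_right)
  qed
qed

lemma RC_mult: "x \<in> (reciprocal_complement :: 'a::idom fract set) \<Longrightarrow> y \<in> reciprocal_complement \<Longrightarrow> x * y \<in> reciprocal_complement"
proof (erule RC_E[of y])
  fix ds :: "'a list" assume "x \<in> reciprocal_complement" "\<forall>d\<in>set ds. d \<noteq> 0" "y = sum_list (map (\<lambda>d. inverse (Fract d 1)) ds)"
  then show ?thesis
  proof (induction ds arbitrary: y)
    case Nil then show ?case using RC_zero by simp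
  next
    case (Cons d ds)
    then show ?case using RC_mult_recip[of x d] RC_add by (simp add: distrib_left)
  qed
qed

lemma RC_subring: "subring_of_field (reciprocal_complement :: 'a::idom fract set)"
  unfolding subring_of_field_def by (simp add: RC_zero RC_one RC_add RC_diff RC_mult)



abbreviation X :: "'g::linordered_ab_group_add nonneg \<Rightarrow> ('g, 'k::field) semigroup_algebra" where
  "X k \<equiv> Poly_Mapping.single k 1"

lemma nonneg_ge0: "0 \<le> (k::'g::linordered_ab_group_add nonneg)"
  by transfer simp

lemma nonneg_le_add: "(m::'g::linordered_ab_group_add nonneg) \<le> m + q"
  by transfer simp

lemma nonneg_add_diff: "(k::'g::linordered_ab_group_add nonneg) \<le> n \<Longrightarrow> k + (n - k) = n"
  by transfer (simp add: max_def)

lemma const_over: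
  fixes d :: "('g::linordered_ab_group_add, 'k::field) semigroup_algebra"
  assumes "c \<noteq> 0" "d \<noteq> 0"
  shows "Fract (Poly_Mapping.single 0 c) d \<in> reciprocal_complement"
proof -
  have "Poly_Mapping.single 0 (inverse c) \<noteq> (0::('g, 'k) semigroup_algebra)"
    by (metis assms(1) inverse_zero_imp_zero lookup_single_eq lookup_zero)
  then have nz: "d * Poly_Mapping.single 0 (inverse c) \<noteq> 0" using assms by simp
  have "Fract (Poly_Mapping.single 0 c) d = inverse (Fract (d * Poly_Mapping.single 0 (inverse c)) 1)"
    using assms nz by (simp add: eq_fract mult_single algebra_simps)
  then show ?thesis using RC_recip[OF nz] by simp
qed

lemma factor:
  fixes g :: "('g::linordered_ab_group_add, 'k::field) semigroup_algebra"
  assumes "\<forall>k\<in>keys g. m \<le> k"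
  shows "\<exists>g0. g = X m * g0 \<and> keys g = (+) m ` keys g0"
proof -
  have inj: "inj ((+) m)" by (simp add: inj_def)
  define g0 where "g0 = Poly_Mapping.map_key ((+) m) g"
  have lk: "lookup g0 q = lookup g (m + q)" for q
    unfolding g0_def using fun_cong[OF map_key.rep_eq[OF inj, of g], of q] by simp
  have eq: "g = X m * g0"
  proof (rule poly_mapping_eqI)
    fix k
    show "lookup g k = lookup (X m * g0) k"
    proof (cases "m \<le> k")
      case True
      then have "k = m + (k - m)" using nonneg_add_diff by metis
      then show ?thesis by (metis lookup_single_mult lk mult_1)
    next
      case False
      have "m \<le> m + q" for q :: "'g nonneg" by (rule nonneg_le_add)
      then have "\<forall>q. k \<noteq> m + q" using False by metis
      moreover have "lookup g k = 0" using False assms by (auto simp: in_keys_iff)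
      ultimately show ?thesis using lookup_single_mult0 by metis
    qed
  qed
  have "keys g = (+) m ` keys g0"
  proof
    show "keys g \<subseteq> (+) m ` keys g0"
    proof
      fix k assume k: "k \<in> keys g"
      then have "k = m + (k - m)" using nonneg_add_diff assms by metis
      then show "k \<in> (+) m ` keys g0" using k lk by (metis image_eqI in_keys_iff)
    qed
    show "(+) m ` keys g0 \<subseteq> keys g" using lk by (auto simp: in_keys_iff)
  qed
  with eq show ?thesis by blast
qed



lemma nonneg_add_le_cancel: "(a::'g::linordered_ab_group_add nonneg) + c \<le> c + b \<Longrightarrow> a \<le> b"
  by transfer simp

lemma nonneg_self_add: "(m::'g::linordered_ab_group_add nonneg) = m + x \<Longrightarrow> x = 0"
  by transfer simp

lemma X_nz [simp]: "X k \<noteq> (0::('g::linordered_ab_group_add, 'k::field) semigroup_algebra)"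
  by (metis lookup_single_eq lookup_zero one_neq_zero)

lemma fract_one: "(1 :: 'a::idom fract) = Fract 1 1" by (simp add: One_fract_def)

lemma key_lemma:
  fixes g :: "('g::linordered_ab_group_add, 'k::field) semigroup_algebra"
  shows "g \<noteq> 0 \<Longrightarrow> Fract (X (deg g)) g \<in> reciprocal_complement"
proof (induction "card (keys g)" arbitrary: g rule: less_induct)
  case less
  have fin: "finite (keys g)" by simp
  have ne: "keys g \<noteq> {}" using less.prems by simp
  show ?case
  proof (cases "card (keys g) = 1")
    case True
    then obtain s where ks: "keys g = {s}" using card_1_singletonE by blast
    have ds: "deg g = s" using ks by (simp add: deg_def)
    define c where "c = lookup g s"
    have "s \<in> keys g" using ks by simp
    then have c: "c \<noteq> 0" unfolding c_def in_keys_iff .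
    have g: "g = Poly_Mapping.single s c"
    proof (rule poly_mapping_eqI)
      fix k show "lookup g k = lookup (Poly_Mapping.single s c) k"
      proof (cases "k = s")
        case True then show ?thesis by (simp add: c_def)
      next
        case False then have "k \<notin> keys g" using ks by simp
        then have "lookup g k = 0" by (simp add: in_keys_iff)
        moreover have "s \<noteq> k" using False by simp
        ultimately show ?thesis by (simp add: lookup_single_not_eq)
      qed
    qed
    have sc: "Poly_Mapping.single 0 c \<noteq> (0::('g,'k) semigroup_algebra)"
      by (metis c lookup_single_eq lookup_zero)
    have "Fract (X (deg g)) g = Fract (Poly_Mapping.single 0 1) (Poly_Mapping.single 0 c)"
      using c sc less.prems by (simp add: ds eq_fract g mult_single)
    then show ?thesis using const_over[of 1 "Poly_Mapping.single 0 c"] c sc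
      by (simp add: g)
  next
    case False
    then have card2: "card (keys g) \<ge> 2" using ne fin by (metis One_nat_def Suc_1 card_0_eq not_less_eq_eq le_antisym less_eq_Suc_le zero_less_iff_neq_zero)
    define m where "m = Min (keys g)"
    have mk: "m \<in> keys g" using fin ne by (simp add: m_def)
    have "\<forall>k\<in>keys g. m \<le> k" using fin by (simp add: m_def)
    then obtain g0 where g: "g = X m * g0" and kg: "keys g = (+) m ` keys g0"
      using factor by blast
    have g0nz: "g0 \<noteq> 0" using less.prems g by auto
    have inj: "inj ((+) m)" by (simp add: inj_def)
    have cg0: "card (keys g0) = card (keys g)" using kg inj by (simp add: card_image inj_on_def)
    have z0: "0 \<in> keys g0" using mk kg nonneg_self_add by (auto)
    define c where "c = lookup g0 0"
    have c: "c \<noteq> 0" using z0 by (simp add: c_def in_keys_iff)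
    define h where "h = g0 - Poly_Mapping.single 0 c"
    have kh: "keys h = keys g0 - {0}" unfolding h_def c_def by (rule keys_rest)
    have ch: "card (keys h) = card (keys g) - 1" using kh z0 cg0 by simp
    then have hnz: "h \<noteq> 0" using card2 by auto
    define m' where "m' = Min (keys h)"
    have "\<forall>k\<in>keys h. m' \<le> k" by (simp add: m'_def)
    then obtain q where h: "h = X m' * q" and kq: "keys h = (+) m' ` keys q"
      using factor by blast
    have qnz: "q \<noteq> 0" using hnz h by auto
    have inj': "inj ((+) m')" by (simp add: inj_def)
    have cq: "card (keys q) < card (keys g)" using kq inj' ch card2
      by (simp add: card_image inj_on_def)
    have IH: "Fract (X (deg q)) q \<in> reciprocal_complement" using less.hyps[OF cq qnz] .
    have kg0: "keys g0 = insert 0 (keys h)" using kh z0 by auto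
    have "deg g0 = max 0 (deg h)" unfolding deg_def kg0 using hnz by (simp add: Max_insert)
    then have dg0: "deg g0 = deg h" using nonneg_ge0[of "deg h"] by (simp add: max_def)
    have dh: "deg h = m' + deg q" using h qnz by (simp add: deg_mult)
    have dg: "deg g = m + deg g0" using g g0nz by (simp add: deg_mult)
    have eq: "Fract (X (deg g)) g = Fract (X (deg q)) q * (1 - Fract (Poly_Mapping.single 0 c) g0)"
    proof -
      have "Fract (X (deg q)) q * (1 - Fract (Poly_Mapping.single 0 c) g0)
          = Fract (X (deg q) * h) (q * g0)"
        unfolding fract_one using g0nz by (simp add: h_def)
      also have "\<dots> = Fract (X (deg g)) g"
      proof -
        have ds: "deg g = m + (m' + deg q)" using dg dg0 dh by simp
        have xs: "X (deg g) = X m * (X m' * X (deg q))" unfolding ds by (simp add: mult_single)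
        have "X (deg q) * h * g = X (deg g) * (q * g0)"
          unfolding xs unfolding h g by (simp only: ac_simps)
        moreover have "q * g0 \<noteq> 0" using g0nz qnz by simp
        ultimately show ?thesis using less.prems by (simp add: eq_fract)
      qed
      finally show ?thesis by simp
    qed
    show ?thesis unfolding eq
      by (intro RC_mult IH RC_diff RC_one const_over c g0nz)
  qed
qed



lemma fract_add_same: "(b::'a::idom) \<noteq> 0 \<Longrightarrow> Fract (x + y) b = Fract x b + Fract y b"
  by (simp add: eq_fract algebra_simps)

lemma fract_zero: "Fract (0::'a::idom) b = 0"
  by (simp add: Zero_fract_def eq_fract)

lemma monom_over:
  fixes b :: "('g::linordered_ab_group_add, 'k::field) semigroup_algebra"
  assumes "b \<noteq> 0" "k \<le> deg b"
  shows "Fract (Poly_Mapping.single k c) b \<in> reciprocal_complement"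
proof (cases "c = 0")
  case True then show ?thesis using RC_zero by (simp add: fract_zero)
next
  case False
  have sum: "k + (deg b - k) = deg b" using assms(2) by (rule nonneg_add_diff)
  have nz: "X (deg b - k) \<noteq> (0::('g, 'k) semigroup_algebra)" by simp
  have "Fract (Poly_Mapping.single k c) b = Fract (Poly_Mapping.single 0 c) 1 * Fract (X (deg b)) b * inverse (Fract (X (deg b - k)) 1)"
  proof -
    have "Poly_Mapping.single k c * (b * X (deg b - k)) = Poly_Mapping.single 0 c * X (deg b) * b"
      by (subst sum[symmetric]) (simp add: mult_single algebra_simps)
    then show ?thesis using assms(1) by (simp add: eq_fract)
  qed
  moreover have "Fract (Poly_Mapping.single (0::'g nonneg) c) 1 \<in> reciprocal_complement"
    by (rule const_over[OF False]) simp
  ultimately show ?thesis using key_lemma[OF assms(1)] RC_recip[OF nz] RC_mult by metis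
qed

lemma W_sub_RC:
  fixes b :: "('g::linordered_ab_group_add, 'k::field) semigroup_algebra"
  assumes "b \<noteq> 0"
  shows "(\<forall>k\<in>keys a. k \<le> deg b) \<Longrightarrow> Fract a b \<in> reciprocal_complement"
proof (induction "card (keys a)" arbitrary: a rule: less_induct)
  case less
  show ?case
  proof (cases "a = 0")
    case True then show ?thesis using RC_zero by (simp add: fract_zero)
  next
    case False
    define k where "k = deg a"
    have k: "k \<in> keys a" using False deg_in_keys k_def by blast
    define r where "r = a - Poly_Mapping.single k (lookup a k)"
    have kr: "keys r = keys a - {k}" unfolding r_def by (rule keys_rest)
    have cr: "card (keys r) < card (keys a)" unfolding kr using k by (intro card_Diff1_less) simp_all
    have r: "Fract r b \<in> reciprocal_complement" using less.hyps[OF cr] less.prems kr by blast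
    have m: "Fract (Poly_Mapping.single k (lookup a k)) b \<in> reciprocal_complement"
      using monom_over[OF assms] less.prems k by blast
    have "a = Poly_Mapping.single k (lookup a k) + r" by (simp add: r_def)
    then have "Fract a b = Fract (Poly_Mapping.single k (lookup a k)) b + Fract r b"
      using assms fract_add_same by metis
    then show ?thesis using RC_add m r by metis
  qed
qed

lemma W_sub_RC':
  fixes a b :: "('g::linordered_ab_group_add, 'k::field) semigroup_algebra"
  assumes "a \<noteq> 0" "b \<noteq> 0" "deg a \<le> deg b"
  shows "Fract a b \<in> reciprocal_complement"
  using W_sub_RC[OF assms(2)] le_deg assms(3) order_trans by blast

definition Pos :: "('g::linordered_ab_group_add, 'k::field) semigroup_algebra fract \<Rightarrow> bool" where
  "Pos x \<longleftrightarrow> (\<forall>a b. a \<noteq> 0 \<longrightarrow> b \<noteq> 0 \<longrightarrow> x = Fract a b \<longrightarrow> deg a \<le> deg b)"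

lemma Pos_zero: "Pos 0"
  unfolding Pos_def by (auto simp: Zero_fract_def eq_fract)

lemma Pos_recip: "d \<noteq> 0 \<Longrightarrow> Pos (inverse (Fract d 1))"
  unfolding Pos_def
proof (intro allI impI)
  fix a b assume d: "d \<noteq> 0" and ab: "a \<noteq> 0" "b \<noteq> 0" "inverse (Fract d 1) = Fract a b"
  then have "b = a * d" by (simp add: eq_fract)
  then have "deg b = deg a + deg d" using ab d by (simp add: deg_mult)
  then show "deg a \<le> deg b" by (simp add: nonneg_le_add)
qed

lemma Pos_add:
  assumes px: "Pos x" and py: "Pos y"
  shows "Pos (x + y)"
proof (cases "x = 0 \<or> y = 0")
  case True then show ?thesis using px py by (metis add.left_neutral add.right_neutral)
next
  case False
  obtain a b where x: "x = Fract a b" "b \<noteq> 0" by (cases x)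
  obtain c d where y: "y = Fract c d" "d \<noteq> 0" by (cases y)
  have a: "a \<noteq> 0" using False x by (auto simp: fract_zero)
  have c: "c \<noteq> 0" using False y by (auto simp: fract_zero)
  have dab: "deg a \<le> deg b" using px x a unfolding Pos_def by blast
  have dcd: "deg c \<le> deg d" using py y c unfolding Pos_def by blast
  show ?thesis unfolding Pos_def
  proof (intro allI impI)
    fix e f assume e: "e \<noteq> 0" and f: "f \<noteq> 0" and xy: "x + y = Fract e f"
    have "Fract (a * d + c * b) (b * d) = Fract e f" using xy x y by simp
    then have E: "e * (b * d) = (a * d + c * b) * f" using x y f by (simp add: eq_fract)
    have p: "a * d + c * b \<noteq> 0" using E e x y by auto
    have h1: "deg e + (deg b + deg d) = deg (a * d + c * b) + deg f"
    proof -
      have 1: "deg (e * (b*d)) = deg e + (deg b + deg d)" using e x y by (simp add: deg_mult)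
      have 2: "deg ((a*d+c*b)*f) = deg (a*d+c*b) + deg f" using p f by (simp add: deg_mult)
      show ?thesis using 1 2 E by simp
    qed
    have h2: "deg (a * d + c * b) \<le> max (deg (a*d)) (deg (c*b))"
      using p a c x y by (intro deg_add) auto
    have h3: "deg (a*d) \<le> deg b + deg d" using a x y dab by (simp add: deg_mult add_right_mono)
    have h4: "deg (c*b) \<le> deg b + deg d" using c x y dcd by (simp add: deg_mult add_left_mono add.commute)
    have s: "deg (a*d+c*b) \<le> deg b + deg d" using h2 h3 h4 by (meson max.bounded_iff order_trans)
    have "deg e + (deg b + deg d) \<le> (deg b + deg d) + deg f" unfolding h1 by (rule add_right_mono[OF s])
    then show "deg e \<le> deg f" by (rule nonneg_add_le_cancel)
  qed
qed

lemma RC_Pos: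
  fixes x :: "('g::linordered_ab_group_add, 'k::field) semigroup_algebra fract"
  shows "x \<in> reciprocal_complement \<Longrightarrow> Pos x"
proof (erule RC_E)
  fix ds :: "('g, 'k) semigroup_algebra list"
  assume "\<forall>d\<in>set ds. d \<noteq> 0" "x = sum_list (map (\<lambda>d. inverse (Fract d 1)) ds)"
  then show "Pos x"
  proof (induction ds arbitrary: x)
    case Nil then show ?case using Pos_zero by simp
  next
    case (Cons d ds)
    from Cons.prems have nz: "d \<noteq> 0" "\<forall>d\<in>set ds. d \<noteq> 0" by auto
    have "x = inverse (Fract d 1) + sum_list (map (\<lambda>d. inverse (Fract d 1)) ds)"
      using Cons.prems(2) by (simp only: list.map sum_list.Cons)
    then show ?case using Pos_add[OF Pos_recip[OF nz(1)] Cons.IH[OF nz(2) refl]] by (simp only:)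
  qed
qed



definition vv :: "('g::linordered_ab_group_add, 'k::field) semigroup_algebra fract \<Rightarrow> 'g" where
  "vv x = (case (SOME p. snd p \<noteq> 0 \<and> x = Fract (fst p) (snd p)) of (a, b) \<Rightarrow>
      Rep_nonneg (deg b) - Rep_nonneg (deg a))"

lemma Rep_deg_mult:
  fixes a b :: "('g::linordered_ab_group_add, 'k::field) semigroup_algebra"
  shows "a \<noteq> 0 \<Longrightarrow> b \<noteq> 0 \<Longrightarrow> Rep_nonneg (deg (a * b)) = Rep_nonneg (deg a) + Rep_nonneg (deg b)"
  by (simp add: deg_mult plus_nonneg.rep_eq)

lemma vv_Fract:
  fixes a b :: "('g::linordered_ab_group_add, 'k::field) semigroup_algebra"
  assumes a: "a \<noteq> 0" and b: "b \<noteq> 0"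
  shows "vv (Fract a b) = Rep_nonneg (deg b) - Rep_nonneg (deg a)"
proof -
  have ex: "\<exists>p. snd p \<noteq> 0 \<and> Fract a b = Fract (fst p) (snd p)" using b by (intro exI[of _ "(a, b)"]) simp
  define p where "p = (SOME p. snd p \<noteq> 0 \<and> Fract a b = Fract (fst p) (snd p))"
  have p: "snd p \<noteq> 0" "Fract a b = Fract (fst p) (snd p)" using someI_ex[OF ex] unfolding p_def by blast+
  obtain a' b' where p': "p = (a', b')" by (cases p)
  have b': "b' \<noteq> 0" using p p' by simp
  have e: "a * b' = a' * b" using p p' b b' by (simp add: eq_fract)
  have a': "a' \<noteq> 0" using e a b b' by auto
  have "Rep_nonneg (deg a) + Rep_nonneg (deg b') = Rep_nonneg (deg a') + Rep_nonneg (deg b)"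
    using Rep_deg_mult[OF a b'] Rep_deg_mult[OF a' b] e by simp
  then have "Rep_nonneg (deg b') - Rep_nonneg (deg a') = Rep_nonneg (deg b) - Rep_nonneg (deg a)"
    by (simp add: algebra_simps)
  then show ?thesis unfolding vv_def p_def[symmetric] p' by simp
qed

lemma fract_nz_cases:
  fixes x :: "'a::idom fract"
  assumes "x \<noteq> 0"
  obtains a b where "x = Fract a b" "a \<noteq> 0" "b \<noteq> 0"
  using assms by (cases x rule: Fract_cases_nonzero) auto

theorem mainTheorem1:
  fixes \<Gamma> :: "'g :: linordered_ab_group_add itself"
    and K :: "'k :: field itself"
  shows "valuation_ring (reciprocal_complement :: ('g, 'k) semigroup_algebra fract set)
       \<and> has_value_group (reciprocal_complement :: ('g, 'k) semigroup_algebra fract set) \<Gamma>"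
proof
  show "valuation_ring (reciprocal_complement :: ('g, 'k) semigroup_algebra fract set)"
    unfolding valuation_ring_def
  proof (intro conjI allI impI)
    show "subring_of_field (reciprocal_complement :: ('g, 'k) semigroup_algebra fract set)"
      by (rule RC_subring)
    fix x :: "('g, 'k) semigroup_algebra fract"
    assume "x \<noteq> 0"
    then obtain a b where x: "x = Fract a b" "a \<noteq> 0" "b \<noteq> 0" by (rule fract_nz_cases)
    show "x \<in> reciprocal_complement \<or> inverse x \<in> reciprocal_complement"
    proof (cases "deg a \<le> deg b")
      case True then show ?thesis using W_sub_RC'[OF x(2,3)] x by simp
    next
      case False then show ?thesis using W_sub_RC'[OF x(3,2)] x by simp
    qed
  qed
  show "has_value_group (reciprocal_complement :: ('g, 'k) semigroup_algebra fract set) \<Gamma>"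
    unfolding has_value_group_def
  proof (intro exI[of _ vv] conjI allI impI)
    fix x y :: "('g, 'k) semigroup_algebra fract"
    assume "x \<noteq> 0" "y \<noteq> 0"
    then obtain a b c d where x: "x = Fract a b" "a \<noteq> 0" "b \<noteq> 0" and y: "y = Fract c d" "c \<noteq> 0" "d \<noteq> 0"
      by (metis fract_nz_cases)
    have "vv (x * y) = vv (Fract (a * c) (b * d))" using x y by simp
    also have "\<dots> = (Rep_nonneg (deg b) + Rep_nonneg (deg d)) - (Rep_nonneg (deg a) + Rep_nonneg (deg c))"
      using x y by (simp add: vv_Fract Rep_deg_mult)
    also have "\<dots> = vv x + vv y" using x y by (simp add: vv_Fract algebra_simps)
    finally show "vv (x * y) = vv x + vv y" .
  next
    show "vv ` {x :: ('g, 'k) semigroup_algebra fract. x \<noteq> 0} = UNIV"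
    proof (intro set_eqI iffI)
      fix \<gamma> :: 'g
      define p :: "'g nonneg" where "p = Abs_nonneg (max (- \<gamma>) 0)"
      define q :: "'g nonneg" where "q = Abs_nonneg (max \<gamma> 0)"
      have rp: "Rep_nonneg p = max (- \<gamma>) 0" unfolding p_def by (rule Abs_nonneg_inverse) simp
      have rq: "Rep_nonneg q = max \<gamma> 0" unfolding q_def by (rule Abs_nonneg_inverse) simp
      have nz: "X p \<noteq> (0::('g, 'k) semigroup_algebra)" "X q \<noteq> (0::('g, 'k) semigroup_algebra)" by simp_all
      have "vv (Fract (X p) (X q) :: ('g, 'k) semigroup_algebra fract) = max \<gamma> 0 - max (- \<gamma>) 0"
        using nz by (simp add: vv_Fract rp rq)
      also have "\<dots> = \<gamma>" by (cases "0 \<le> \<gamma>") (auto simp: max_def)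
      finally have "vv (Fract (X p) (X q) :: ('g, 'k) semigroup_algebra fract) = \<gamma>" .
      moreover have "Fract (X p) (X q) \<noteq> (0 :: ('g, 'k) semigroup_algebra fract)"
        using nz by (simp add: Zero_fract_def eq_fract)
      ultimately show "\<gamma> \<in> vv ` {x :: ('g, 'k) semigroup_algebra fract. x \<noteq> 0}" by force
    qed simp
  next
    fix x :: "('g, 'k) semigroup_algebra fract"
    assume "x \<noteq> 0"
    then obtain a b where x: "x = Fract a b" "a \<noteq> 0" "b \<noteq> 0" by (rule fract_nz_cases)
    have "0 \<le> vv x \<longleftrightarrow> deg a \<le> deg b"
      using x by (simp add: vv_Fract less_eq_nonneg.rep_eq)
    moreover have "x \<in> reciprocal_complement \<Longrightarrow> deg a \<le> deg b"
      using RC_Pos x unfolding Pos_def by blast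
    moreover have "deg a \<le> deg b \<Longrightarrow> x \<in> reciprocal_complement"
      using W_sub_RC' x by blast
    ultimately show "x \<in> reciprocal_complement \<longleftrightarrow> 0 \<le> vv x" by blast
  qed
qed

end
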